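(* Let $d\in\mathbb N$, $\mathcal D=\{1,\dots,d\}$, $\mathbf u\subseteq\mathcal D$, let $w:\mathbb Z^d\to[1,\infty)$ be a weight function and $f\in \mathcal A^w(\mathbb T^d)$. Then for any weight function $w_{\mathbf u}:\mathbb Z^{|\mathbf u|}\to[1,\infty)$ with $$w_{\mathbf u}(\mathbf k_{\mathbf u})\le w(\mathbf k)\quad\text{for all }\mathbf k\in\mathbb Z^d\text{ with }\mathbf k_{\mathbf u^c}=\mathbf 0,$$ we have $\mathrm P_{\mathbf u}f\in \mathcal A^{w_{\mathbf u}}(\mathbb T^{|\mathbf u|})$ and $f_{\mathbf u}\in \mathcal A^{w_{\mathbf u}}(\mathbb T^{|\mathbf u|})$.
   Context: $\mathbb T=[0,1)$ with periodic identification; $c_{\mathbf k}(g)=\int_{\mathbb T^m} g(\mathbf x)e^{-2\pi i\mathbf k\cdot\mathbf x}\,d\mathbf x$. For a weight $v:\mathbb Z^m\to[1,\infty)$ the weighted Wiener algebra is $\mathcal A^{v}(\mathbb T^m)=\{g\in \mathrm L_1(\mathbb T^m): \|g\|_{\mathcal A^v}=\sum_{\mathbf k\in\mathbb Z^m}v(\mathbf k)|c_{\mathbf k}(g)|<\infty\}$. For $\mathbf u\subseteq\mathcal D$, $\mathbf u^c=\mathcal D\setminus\mathbf u$, $\mathbf x_{\mathbf u}=(x_i)_{i\in\mathbf u}$, and $\mathbf k_{\mathbf u}$ analogously. The projection is $\mathrm P_{\mathbf u}f(\mathbf x_{\mathbf u})=\int_{\mathbb T^{|\mathbf u^c|}}f(\mathbf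 x)\,d\mathbf x_{\mathbf u^c}$; the ANOVA terms are defined recursively by $f_{\mathbf u}=\mathrm P_{\mathbf u}f-\sum_{\mathbf v\subsetneq\mathbf u}f_{\mathbf v}$; both are regarded as functions on $\mathbb T^{|\mathbf u|}$. Convention $\mathbb Z^{0}=\{0\}$. *)

theory Defs
  imports "HOL-Analysis.Analysis"
begin

text \<open>Torus T^I for a finite coordinate set I: points are functions nat => real,
  extensional outside I (PiE), with coordinates in [0,1); product Lebesgue measure.
  For I = {} this is the one-point probability space (convention Z^0 = {0}).\<close>
definition torus :: "nat set \<Rightarrow> (nat \<Rightarrow> real) measure" where
  "torus I = PiM I (\<lambda>_. lebesgue_on {0..<1::real})"

definition lattice :: "nat set \<Rightarrow> (nat \<Rightarrow> int) set" where
  "lattice I = {k. \<forall>i. i \<notin> I \<longrightarrow> k i = 0}"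

definition fourier_coeff :: "nat set \<Rightarrow> ((nat \<Rightarrow> real) \<Rightarrow> complex) \<Rightarrow> (nat \<Rightarrow> int) \<Rightarrow> complex" where
  "fourier_coeff I g k =
     (LINT x | torus I. g x * cis (- 2 * pi * (\<Sum>i\<in>I. of_int (k i) * x i)))"

definition weight :: "nat set \<Rightarrow> ((nat \<Rightarrow> int) \<Rightarrow> real) \<Rightarrow> bool" where
  "weight I v \<longleftrightarrow> (\<forall>k\<in>lattice I. 1 \<le> v k)"

definition wiener :: "nat set \<Rightarrow> ((nat \<Rightarrow> int) \<Rightarrow> real) \<Rightarrow> ((nat \<Rightarrow> real) \<Rightarrow> complex) set" where
  "wiener I v = {g. integrable (torus I) g \<and>
      (\<lambda>k. v k * norm (fourier_coeff I g k)) summable_on lattice I}"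

definition proj :: "nat set \<Rightarrow> ((nat \<Rightarrow> real) \<Rightarrow> complex) \<Rightarrow> nat set \<Rightarrow> (nat \<Rightarrow> real) \<Rightarrow> complex" where
  "proj D f u = (\<lambda>xu. LINT y | torus (D - u). f (merge u (D - u) (xu, y)))"

function anova :: "nat set \<Rightarrow> ((nat \<Rightarrow> real) \<Rightarrow> complex) \<Rightarrow> nat set \<Rightarrow> (nat \<Rightarrow> real) \<Rightarrow> complex" where
  "anova D f u = (if finite u then
      (\<lambda>x. proj D f u x - (\<Sum>v\<in>{v. v \<subset> u}. anova D f v (restrict x v)))
    else (\<lambda>_. 0))"
  by auto
termination
  by (relation "Wellfounded.measure (\<lambda>(D, f, u). card u)") (auto intro: psubset_card_mono)

end

theory Submission
  imports Defs "HOL-Probability.Probability"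
begin

lemma prob_unit: "prob_space (lebesgue_on {0..<1::real})"
  apply (rule prob_spaceI)
  apply (simp add: emeasure_restrict_space)
  done

lemma cis_int_zero:
  fixes k :: int assumes "k \<noteq> 0"
  shows "(LINT t | lebesgue_on {0..<1::real}. cis (- 2 * pi * (of_int k * t))) = 0"
proof -
  define c where "c = - 2 * pi * of_int k"
  have c0: "c \<noteq> 0" using assms by (simp add: c_def)
  have eq: "(\<lambda>t. cis (- 2 * pi * (of_int k * t))) = (\<lambda>t. cis (c * t))"
    by (auto simp: c_def algebra_simps)
  define F where "F t = cis (c * t) / (\<i> * of_real c)" for t
  have der: "(F has_vector_derivative cis (c * t)) (at t within {0..1})" for t
    unfolding F_def has_vector_derivative_def
    apply (rule has_derivative_eq_rhs)
     apply (rule derivative_eq_intros has_derivative_cis | simp)+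
    using c0 by (auto simp: fun_eq_iff scaleR_conv_of_real field_simps)
  have "((\<lambda>t. cis (c * t)) has_integral (F 1 - F 0)) {0..1}"
    by (rule fundamental_theorem_of_calculus) (auto intro: der)
  moreover have "F 1 - F 0 = 0"
  proof -
    have "cis c = cis (2 * pi * real_of_int (- k))" by (simp add: c_def)
    also have "\<dots> = 1" by (rule cis_multiple_2pi) simp
    finally have "cis c = 1" .
    then show ?thesis by (simp add: F_def)
  qed
  ultimately have hi: "((\<lambda>t. cis (c * t)) has_integral 0) {0..<1}"
    by (subst has_integral_spike_set_eq[where T="{0..1}"]) (auto intro: negligible_subset[of "{1}"])
  have meas: "(\<lambda>t. cis (c * t)) \<in> borel_measurable (lebesgue_on {0..<1::real})"
    by (intro continuous_imp_measurable_on_sets_lebesgue continuous_intros) auto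
  have "integrable (lebesgue_on {0..<1::real}) (\<lambda>t. cis (c * t))"
    using prob_unit
    by (intro finite_measure.integrable_const_bound[where B=1]) (auto simp: meas prob_space_def)
  then have "(LINT t | lebesgue_on {0..<1::real}. cis (c * t)) = integral {0..<1} (\<lambda>t. cis (c * t))"
    by (intro lebesgue_integral_eq_integral) auto
  with hi have "(LINT t | lebesgue_on {0..<1::real}. cis (c * t)) = 0" by (simp add: integral_unique)
  then show ?thesis unfolding eq .
qed

interpretation T: product_prob_space "\<lambda>_::nat. lebesgue_on {0..<1::real}" UNIV
  unfolding product_prob_space_def product_prob_space_axioms_def product_sigma_finite_def
  using prob_unit prob_space_imp_sigma_finite by blast

lemma torus_prob: "finite I \<Longrightarrow> prob_space (torus I)"
  unfolding torus_def by (intro prob_space_PiM prob_unit)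

lemma meas_id_unit[measurable]: "(\<lambda>t. t) \<in> borel_measurable (lebesgue_on {0..<1::real})"
  by (intro continuous_imp_measurable_on_sets_lebesgue continuous_intros) auto

lemma meas_comp_unit[measurable]:
  "i \<in> I \<Longrightarrow> (\<lambda>x. x i) \<in> borel_measurable (Pi\<^sub>M I (\<lambda>_. lebesgue_on {0..<1::real}))"
  using measurable_compose[OF measurable_component_singleton[of i I "\<lambda>_. lebesgue_on {0..<1::real}"] meas_id_unit] by simp

lemma meas_cis[measurable]:
  "(\<lambda>x. cis (- 2 * pi * (\<Sum>i\<in>I. of_int (k i) * x i))) \<in> borel_measurable (torus I)"
proof -
  have c: "cis \<in> borel_measurable borel"
    by (intro borel_measurable_continuous_onI continuous_intros)
  have s: "(\<lambda>x. - 2 * pi * (\<Sum>i\<in>I. of_int (k i) * x i)) \<in> borel_measurable (torus I)"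
    unfolding torus_def by measurable
  show ?thesis using measurable_compose[OF s c] by (simp add: comp_def)
qed

lemma int_fc:
  assumes "integrable (torus I) g"
  shows "integrable (torus I) (\<lambda>x. g x * cis (- 2 * pi * (\<Sum>i\<in>I. of_int (k i) * x i)))"
  apply (rule Bochner_Integration.integrable_bound[OF assms])
  using assms apply measurable
  apply (simp add: norm_mult)
  done

lemma fold_int:
  assumes IJ: "I \<inter> J = {}" and fin: "finite I" "finite J"
    and g: "integrable (torus (I \<union> J)) (g :: (nat \<Rightarrow> real) \<Rightarrow> complex)"
  shows "integrable (torus I) (\<lambda>x. LINT y|torus J. g (merge I J (x, y)))"
proof -
  interpret I: finite_product_sigma_finite "\<lambda>_::nat. lebesgue_on {0..<1::real}" I by standard fact
  interpret J: finite_product_sigma_finite "\<lambda>_::nat. lebesgue_on {0..<1::real}" J by standard fact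
  interpret P: pair_sigma_finite "torus I" "torus J" unfolding torus_def ..
  have f_int: "integrable (torus I \<Otimes>\<^sub>M torus J) (\<lambda>x. g (merge I J x))"
  proof -
    have "integrable (distr (Pi\<^sub>M I (\<lambda>_. lebesgue_on {0..<1::real}) \<Otimes>\<^sub>M Pi\<^sub>M J (\<lambda>_. lebesgue_on {0..<1::real}))
       (Pi\<^sub>M (I \<union> J) (\<lambda>_. lebesgue_on {0..<1::real})) (merge I J)) g"
      using g by (simp add: T.distr_merge[OF IJ fin] torus_def)
    then show ?thesis unfolding torus_def by (rule integrable_distr[OF measurable_merge])
  qed
  show ?thesis using P.integrable_fst'[OF f_int] by simp
qed

lemma fold_integral:
  assumes IJ: "I \<inter> J = {}" and fin: "finite I" "finite J"
    and g: "integrable (torus (I \<union> J)) (g :: (nat \<Rightarrow> real) \<Rightarrow> complex)"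
  shows "integral\<^sup>L (torus (I \<union> J)) g = (LINT x|torus I. LINT y|torus J. g (merge I J (x, y)))"
  using T.product_integral_fold[OF IJ fin, of g] g unfolding torus_def by simp


lemma proj_int:
  assumes fin: "finite D" and vD: "v \<subseteq> D" and f: "integrable (torus D) f"
  shows "integrable (torus v) (proj D f v)"
proof -
  have DJ: "D = v \<union> (D - v)" using vD by auto
  have "integrable (torus (v \<union> (D - v))) f" using f DJ by simp
  from fold_int[OF _ _ _ this] fin vD show ?thesis
    unfolding Defs.proj_def by (auto intro: finite_subset)
qed

lemma proj_fc:
  assumes fin: "finite D" and vD: "v \<subseteq> D" and f: "integrable (torus D) f"
    and k: "k \<in> lattice v"
  shows "fourier_coeff v (proj D f v) k = fourier_coeff D f k"
proof -
  define J where "J = D - v"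
  have DJ: "D = v \<union> J" and vJ: "v \<inter> J = {}" using vD by (auto simp: J_def)
  have finv: "finite v" "finite J" using fin vD finite_subset by (auto simp: J_def)
  let ?c = "\<lambda>x. cis (- 2 * pi * (\<Sum>i\<in>v. of_int (k i) * x i))"
  have sumeq: "(\<Sum>i\<in>D. of_int (k i) * merge v J (x, y) i) = (\<Sum>i\<in>v. of_int (k i) * x i)" for x y
  proof -
    have "(\<Sum>i\<in>D. of_int (k i) * merge v J (x, y) i) = (\<Sum>i\<in>v. of_int (k i) * merge v J (x, y) i) + (\<Sum>i\<in>J. of_int (k i) * merge v J (x, y) i)"
      unfolding DJ using finv vJ by (rule sum.union_disjoint[OF _ _ ])
    also have "(\<Sum>i\<in>J. of_int (k i) * merge v J (x, y) i) = 0"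
      using k vJ by (intro sum.neutral) (auto simp: lattice_def)
    also have "(\<Sum>i\<in>v. of_int (k i) * merge v J (x, y) i) = (\<Sum>i\<in>v. of_int (k i) * x i)"
      by (intro sum.cong) (auto simp: merge_def)
    finally show ?thesis by simp
  qed
  have fi: "integrable (torus (v \<union> J)) (\<lambda>x. f x * cis (- 2 * pi * (\<Sum>i\<in>D. of_int (k i) * x i)))"
    using int_fc[OF f, of k] DJ by simp
  have "fourier_coeff D f k = (LINT x|torus (v \<union> J). f x * cis (- 2 * pi * (\<Sum>i\<in>D. of_int (k i) * x i)))"
    unfolding fourier_coeff_def using DJ by simp
  also have "\<dots> = (LINT x|torus v. LINT y|torus J. f (merge v J (x, y)) * cis (- 2 * pi * (\<Sum>i\<in>D. of_int (k i) * merge v J (x, y) i)))"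
    by (rule fold_integral[OF vJ finv fi])
  also have "\<dots> = (LINT x|torus v. (LINT y|torus J. f (merge v J (x, y))) * ?c x)"
    by (simp add: sumeq)
  also have "\<dots> = fourier_coeff v (proj D f v) k"
    by (simp add: fourier_coeff_def Defs.proj_def J_def)
  finally show ?thesis by simp
qed

lemma restr_dist:
  assumes "finite u" "v \<subseteq> u"
  shows "torus v = distr (torus u) (torus v) (\<lambda>x. restrict x v)"
  unfolding torus_def by (rule T.distr_restrict) (use assms in auto)

lemma restr_int:
  assumes fin: "finite u" and vu: "v \<subseteq> u" and g: "integrable (torus v) (g :: _ \<Rightarrow> complex)"
  shows "integrable (torus u) (\<lambda>x. g (restrict x v))"
proof -
  have "integrable (distr (torus u) (torus v) (\<lambda>x. restrict x v)) g"
    using g restr_dist[OF fin vu] by simp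
  then show ?thesis unfolding torus_def
    by (intro integrable_distr[OF measurable_restrict_subset[OF vu]]) (simp add: torus_def)
qed

lemma restr_fc:
  assumes fin: "finite u" and vu: "v \<subseteq> u" and g: "integrable (torus v) (g :: _ \<Rightarrow> complex)"
    and k: "k \<in> lattice u"
  shows "fourier_coeff u (\<lambda>x. g (restrict x v)) k = (if k \<in> lattice v then fourier_coeff v g k else 0)"
proof (cases "k \<in> lattice v")
  case True
  define h where "h y = g y * cis (- 2 * pi * (\<Sum>i\<in>v. of_int (k i) * y i))" for y
  have hm: "h \<in> borel_measurable (torus v)"
    unfolding h_def using g by measurable
  have pt: "g (restrict x v) * cis (- 2 * pi * (\<Sum>i\<in>u. of_int (k i) * x i)) = h (restrict x v)" for x
  proof -
    have "(\<Sum>i\<in>u. of_int (k i) * x i) = (\<Sum>i\<in>v. of_int (k i) * x i)"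
      using True fin vu by (intro sum.mono_neutral_right) (auto simp: lattice_def)
    also have "\<dots> = (\<Sum>i\<in>v. of_int (k i) * restrict x v i)" by simp
    finally show ?thesis by (simp add: h_def)
  qed
  have "fourier_coeff v g k = integral\<^sup>L (torus v) h"
    by (simp add: fourier_coeff_def h_def[abs_def])
  also have "\<dots> = integral\<^sup>L (distr (torus u) (torus v) (\<lambda>x. restrict x v)) h"
    by (rule arg_cong[where f = "\<lambda>M. integral\<^sup>L M h"]) (rule restr_dist[OF fin vu])
  also have "\<dots> = (LINT x|torus u. h (restrict x v))"
    by (rule integral_distr) (use hm vu in \<open>auto simp: torus_def intro: measurable_restrict_subset\<close>)
  also have "\<dots> = fourier_coeff u (\<lambda>x. g (restrict x v)) k"
    by (simp only: fourier_coeff_def pt)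
  finally show ?thesis using True by simp
next
  case False
  then obtain j where j: "j \<in> u" "j \<notin> v" "k j \<noteq> 0"
    using k by (auto simp: lattice_def)
  define I where "I = u - {j}"
  have uI: "u = insert j I" "j \<notin> I" "finite I" using j fin by (auto simp: I_def)
  let ?F = "\<lambda>x. g (restrict x v) * cis (- 2 * pi * (\<Sum>i\<in>u. of_int (k i) * x i))"
  have Fi: "integrable (torus (insert j I)) ?F"
    using int_fc[OF restr_int[OF fin vu g], of k] uI by simp
  have "fourier_coeff u (\<lambda>x. g (restrict x v)) k = integral\<^sup>L (torus (insert j I)) ?F"
    unfolding fourier_coeff_def using uI by simp
  also have "\<dots> = (LINT x|torus I. LINT t|lebesgue_on {0..<1::real}. ?F (x(j := t)))"
    using T.product_integral_insert[OF uI(3,2), of ?F] Fi unfolding torus_def by simp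
  also have "\<dots> = (LINT x|torus I. (0::complex))"
  proof -
    have inner: "(LINT t|lebesgue_on {0..<1::real}. ?F (x(j := t))) = 0" for x
    proof -
      have eq: "?F (x(j := t)) = (g (restrict x v) * cis (- 2 * pi * (\<Sum>i\<in>I. of_int (k i) * x i)))
                 * cis (- 2 * pi * (of_int (k j) * t))" for t
      proof -
        have r: "restrict (x(j := t)) v = restrict x v" using j by (auto simp: restrict_def)
        have "(\<Sum>i\<in>u. of_int (k i) * (x(j := t)) i) = of_int (k j) * t + (\<Sum>i\<in>I. of_int (k i) * (x(j := t)) i)"
          using uI by simp
        also have "(\<Sum>i\<in>I. of_int (k i) * (x(j := t)) i) = (\<Sum>i\<in>I. of_int (k i) * x i)"
          using uI by (intro sum.cong) auto
        finally have s: "(\<Sum>i\<in>u. of_int (k i) * (x(j := t)) i) = of_int (k j) * t + (\<Sum>i\<in>I. of_int (k i) * x i)" .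
        have c: "cis (- 2 * pi * (of_int (k j) * t + (\<Sum>i\<in>I. of_int (k i) * x i))) =
             cis (- 2 * pi * (\<Sum>i\<in>I. of_int (k i) * x i)) * cis (- 2 * pi * (of_int (k j) * t))"
          by (subst cis_mult) (simp add: algebra_simps)
        show ?thesis unfolding r s c by (simp only: mult.assoc)
      qed
      show ?thesis
        by (simp only: eq integral_mult_right_zero cis_int_zero[OF j(3)] mult_zero_right)
    qed
    show ?thesis by (simp only: inner)
  qed
  finally have "fourier_coeff u (\<lambda>x. g (restrict x v)) k = 0" by simp
  then show ?thesis using False by simp
qed


declare anova.simps[simp del]

lemma summable_sum_real:
  fixes F :: "'w \<Rightarrow> 'k \<Rightarrow> real"
  assumes "finite W" "\<And>w. w \<in> W \<Longrightarrow> F w summable_on S"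
  shows "(\<lambda>k. \<Sum>w\<in>W. F w k) summable_on S"
  using assms
proof (induction W rule: finite_induct)
  case empty then show ?case by simp
next
  case (insert a W)
  then show ?case by (simp add: summable_on_add)
qed

lemma fc_diff_sum:
  assumes W: "finite W" and P: "integrable (torus I) P"
    and G: "\<And>w. w \<in> W \<Longrightarrow> integrable (torus I) (G w)"
  shows "fourier_coeff I (\<lambda>x. P x - (\<Sum>w\<in>W. G w x)) k = fourier_coeff I P k - (\<Sum>w\<in>W. fourier_coeff I (G w) k)"
proof -
  let ?c = "\<lambda>x. cis (- 2 * pi * (\<Sum>i\<in>I. of_int (k i) * x i))"
  have eq: "(\<lambda>x. (P x - (\<Sum>w\<in>W. G w x)) * ?c x) = (\<lambda>x. P x * ?c x - (\<Sum>w\<in>W. G w x * ?c x))"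
    by (simp add: left_diff_distrib sum_distrib_right)
  have i1: "integrable (torus I) (\<lambda>x. P x * ?c x)" by (rule int_fc[OF P])
  have i2: "\<And>w. w \<in> W \<Longrightarrow> integrable (torus I) (\<lambda>x. G w x * ?c x)" by (rule int_fc[OF G])
  have "fourier_coeff I (\<lambda>x. P x - (\<Sum>w\<in>W. G w x)) k = (LINT x|torus I. P x * ?c x - (\<Sum>w\<in>W. G w x * ?c x))"
    unfolding fourier_coeff_def eq ..
  also have "\<dots> = (LINT x|torus I. P x * ?c x) - (LINT x|torus I. (\<Sum>w\<in>W. G w x * ?c x))"
    by (rule Bochner_Integration.integral_diff[OF i1 Bochner_Integration.integrable_sum]) (rule i2)
  also have "(LINT x|torus I. (\<Sum>w\<in>W. G w x * ?c x)) = (\<Sum>w\<in>W. LINT x|torus I. G w x * ?c x)"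
    by (rule Bochner_Integration.integral_sum) (rule i2)
  finally show ?thesis by (simp add: fourier_coeff_def)
qed

lemma lattice_mono: "A \<subseteq> B \<Longrightarrow> lattice A \<subseteq> lattice B"
  by (auto simp: lattice_def)

theorem theorem3p11:
  fixes d :: nat
    and u :: "nat set"
    and w wu :: "(nat \<Rightarrow> int) \<Rightarrow> real"
    and f :: "(nat \<Rightarrow> real) \<Rightarrow> complex"
  assumes u_sub: "u \<subseteq> {1..d}"
    and w_weight: "weight {1..d} w"
    and f_in: "f \<in> wiener {1..d} w"
    and wu_weight: "weight u wu"
    and wu_le: "\<forall>k\<in>lattice {1..d}. (\<forall>i\<in>{1..d} - u. k i = 0) \<longrightarrow> wu k \<le> w k"
  shows "proj {1..d} f u \<in> wiener u wu \<and> anova {1..d} f u \<in> wiener u wu"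
proof -
  define D where "D = {1..d}"
  have finD: "finite D" by (simp add: D_def)
  have uD: "u \<subseteq> D" using u_sub by (simp add: D_def)
  have finu: "finite u" using finD uD finite_subset by blast
  have fi: "integrable (torus D) f" and fs: "(\<lambda>k. w k * norm (fourier_coeff D f k)) summable_on lattice D"
    using f_in by (auto simp: wiener_def D_def)
  have wu1: "k \<in> lattice u \<Longrightarrow> 1 \<le> wu k" for k using wu_weight by (auto simp: weight_def)
  have base: "(\<lambda>k. wu k * norm (fourier_coeff D f k)) summable_on lattice v" if vu: "v \<subseteq> u" for v
  proof -
    have sub: "lattice v \<subseteq> lattice D" using vu uD by (auto simp: lattice_def)
    have "(\<lambda>k. w k * norm (fourier_coeff D f k)) summable_on lattice v"
      by (rule summable_on_subset[OF fs sub])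
    then show ?thesis
    proof (rule summable_on_comparison_test)
      fix k assume k: "k \<in> lattice v"
      then have ku: "k \<in> lattice u" using lattice_mono[OF vu] by auto
      have "wu k \<le> w k" using wu_le k sub ku by (auto simp: D_def lattice_def)
      then show "wu k * norm (fourier_coeff D f k) \<le> w k * norm (fourier_coeff D f k)"
        by (simp add: mult_right_mono)
      show "0 \<le> wu k * norm (fourier_coeff D f k)" using wu1[OF ku] by simp
    qed
  qed
  have projw: "proj D f v \<in> wiener v wu" if vu: "v \<subseteq> u" for v
  proof -
    have vD: "v \<subseteq> D" using vu uD by auto
    have "(\<lambda>k. wu k * norm (fourier_coeff v (proj D f v) k)) summable_on lattice v"
      using base[OF vu] by (rule summable_on_cong[THEN iffD1, rotated]) (simp add: proj_fc[OF finD vD fi])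
    then show ?thesis using proj_int[OF finD vD fi] by (simp add: wiener_def)
  qed
  have anw: "anova D f v \<in> wiener v wu" if "finite v" "v \<subseteq> u" for v
    using that
  proof (induction v rule: finite_psubset_induct)
    case (psubset v)
    have vD: "v \<subseteq> D" using psubset.prems uD by auto
    define W where "W = {w. w \<subset> v}"
    have finW: "finite W"
      by (rule finite_subset[of W "Pow v"]) (use psubset.hyps in \<open>auto simp: W_def\<close>)
    have IH: "anova D f w \<in> wiener w wu" if "w \<in> W" for w
      using psubset.IH[of w] that psubset.prems psubset.hyps by (auto simp: W_def intro: finite_subset)
    have wv: "w \<subseteq> v" if "w \<in> W" for w using that by (auto simp: W_def)
    have Ai: "integrable (torus w) (anova D f w)" if "w \<in> W" for w using IH[OF that] by (simp add: wiener_def)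
    have Gi: "integrable (torus v) (\<lambda>x. anova D f w (restrict x w))" if "w \<in> W" for w
      by (rule restr_int[OF psubset.hyps wv[OF that] Ai[OF that]])
    have aeq: "anova D f v = (\<lambda>x. proj D f v x - (\<Sum>w\<in>W. anova D f w (restrict x w)))"
      by (subst anova.simps) (simp only: psubset.hyps if_True W_def)
    have Pi: "integrable (torus v) (proj D f v)" by (rule proj_int[OF finD vD fi])
    have int: "integrable (torus v) (anova D f v)"
      unfolding aeq using Pi Gi by (intro Bochner_Integration.integrable_diff Bochner_Integration.integrable_sum) auto
    let ?R = "\<lambda>k. wu k * norm (fourier_coeff D f k) +
                 (\<Sum>w\<in>W. if k \<in> lattice w then wu k * norm (fourier_coeff w (anova D f w) k) else 0)"
    have Rs: "?R summable_on lattice v"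
    proof (rule summable_on_add)
      show "(\<lambda>k. wu k * norm (fourier_coeff D f k)) summable_on lattice v" by (rule base[OF psubset.prems])
      show "(\<lambda>k. \<Sum>w\<in>W. if k \<in> lattice w then wu k * norm (fourier_coeff w (anova D f w) k) else 0) summable_on lattice v"
      proof (rule summable_sum_real[OF finW])
        fix w assume w: "w \<in> W"
        have "(\<lambda>k. wu k * norm (fourier_coeff w (anova D f w) k)) summable_on lattice w"
          using IH[OF w] by (simp add: wiener_def)
        then show "(\<lambda>k. if k \<in> lattice w then wu k * norm (fourier_coeff w (anova D f w) k) else 0) summable_on lattice v"
          using lattice_mono[OF wv[OF w]]
          by (subst summable_on_cong_neutral[symmetric]) auto
      qed
    qed
    have "(\<lambda>k. wu k * norm (fourier_coeff v (anova D f v) k)) summable_on lattice v"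
    proof (rule summable_on_comparison_test[OF Rs])
      fix k assume k: "k \<in> lattice v"
      then have ku: "k \<in> lattice u" using lattice_mono[OF psubset.prems] by auto
      have wk: "0 \<le> wu k" using wu1[OF ku] by simp
      have fc: "fourier_coeff v (anova D f v) k = fourier_coeff D f k -
           (\<Sum>w\<in>W. if k \<in> lattice w then fourier_coeff w (anova D f w) k else 0)"
        unfolding aeq
        by (simp add: fc_diff_sum[OF finW Pi Gi] proj_fc[OF finD vD fi k] restr_fc[OF psubset.hyps wv Ai k])
      have "norm (fourier_coeff v (anova D f v) k) \<le> norm (fourier_coeff D f k) +
           norm (\<Sum>w\<in>W. if k \<in> lattice w then fourier_coeff w (anova D f w) k else 0)"
        unfolding fc by (rule norm_triangle_ineq4)
      also have "norm (\<Sum>w\<in>W. if k \<in> lattice w then fourier_coeff w (anova D f w) k else 0)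
          \<le> (\<Sum>w\<in>W. if k \<in> lattice w then norm (fourier_coeff w (anova D f w) k) else 0)"
        by (rule order_trans[OF norm_sum]) (rule sum_mono, simp)
      finally have "wu k * norm (fourier_coeff v (anova D f v) k) \<le> wu k * (norm (fourier_coeff D f k) +
           (\<Sum>w\<in>W. if k \<in> lattice w then norm (fourier_coeff w (anova D f w) k) else 0))"
        using wk by (simp add: mult_left_mono)
      also have "\<dots> = ?R k" by (auto simp: distrib_left sum_distrib_left intro!: sum.cong)
      finally show "wu k * norm (fourier_coeff v (anova D f v) k) \<le> ?R k" .
      show "0 \<le> wu k * norm (fourier_coeff v (anova D f v) k)" using wk by simp
    qed
    then show ?case using int by (simp add: wiener_def)
  qed
  show ?thesis using projw[OF order_refl] anw[OF finu order_refl] by (simp add: D_def)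
qed

end
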